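(* Let $f:(0,\infty)\to(0,\infty)$ be continuous, let $F(x)=\int_x^1\frac{du}{f(u)}$ for $x>0$, and suppose $\lim_{x\to0^+}F(x)=+\infty$, so that the inverse $F^{-1}$ of the strictly decreasing function $F$ is defined on $[0,\infty)$ and $F^{-1}(t)\to0$ as $t\to\infty$. If $f\circ F^{-1}\in\mathrm{RV}_\infty(-1)$, then $F^{-1}\in\mathrm{RV}_\infty(0)$.
   Context: $\mathrm{RV}_\infty(\alpha)$: the class of measurable functions $h$, positive for large arguments, with $\lim_{t\to\infty}h(\lambda t)/h(t)=\lambda^\alpha$ for every $\lambda>0$. *)

theory Defs
  imports "HOL-Analysis.Analysis"
begin

definition RV_inf :: "real \<Rightarrow> (real \<Rightarrow> real) set" where
  "RV_inf \<alpha> = {h. set_borel_measurable borel {0<..} h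
      \<and> eventually (\<lambda>t. h t > 0) at_top
      \<and> (\<forall>c>0. ((\<lambda>t. h (c * t) / h t) \<longlongrightarrow> c powr \<alpha>) at_top)}"

definition F_of :: "(real \<Rightarrow> real) \<Rightarrow> real \<Rightarrow> real" where
  "F_of f x = (LBINT u=x..1. 1 / f u)"

definition Finv :: "(real \<Rightarrow> real) \<Rightarrow> real \<Rightarrow> real" where
  "Finv f = inv_into {0<..} (F_of f)"

end

theory Submission
  imports Defs
begin

lemma F_deriv:
  fixes f :: "real \<Rightarrow> real"
  assumes cont: "continuous_on {0<..} f" and pos: "\<forall>x>0. f x > 0" and x: "x > 0"
  shows "(F_of f has_real_derivative -(1/f x)) (at x)"
proof -
  define a where "a = min x 1 / 2"
  define b where "b = max x 1 + 1"
  have ab: "a > 0" "a \<le> 1" "1 \<le> b" "a < x" "x < b" using x by (auto simp: a_def b_def)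
  have sub: "{a..b} \<subseteq> {0<..}" using ab by auto
  have contf: "continuous_on {a..b} (\<lambda>u. 1/f u)"
    using sub pos by (intro continuous_intros continuous_on_subset[OF cont]) auto
  have "((\<lambda>u. LBINT y=ereal 1..u. 1/f y) has_vector_derivative (1/f x)) (at x within {a..b})"
    by (rule interval_integral_FTC2[OF ab(2,3) contf]) (use ab in auto)
  moreover have "at x within {a..b} = at x"
    by (rule at_within_interior) (use ab in auto)
  ultimately have d: "((\<lambda>u. LBINT y=ereal 1..u. 1/f y) has_real_derivative (1/f x)) (at x)"
    by (simp add: has_real_derivative_iff_has_vector_derivative)
  have e: "F_of f = (\<lambda>u. - (LBINT y=ereal 1..u. 1/f y))"
    unfolding F_of_def by (rule ext, subst interval_integral_endpoints_reverse, simp add: one_ereal_def)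
  show ?thesis unfolding e by (rule DERIV_minus[OF d])
qed

lemma rv0_core:
  fixes G h :: "real \<Rightarrow> real"
  assumes Gpos: "\<forall>t>0. G t > 0" and hpos: "\<forall>t>0. h t > 0"
  and der: "\<forall>t>0. (G has_real_derivative -h t) (at t)"
  and rv: "\<forall>c>0. ((\<lambda>t. h(c*t)/h t) \<longlongrightarrow> c powr -1) at_top"
  and c: "c > 1"
  shows "((\<lambda>t. G(c*t)/G t) \<longlongrightarrow> 1) at_top"
proof -
  have mono: "G (c*t) \<le> G t" if t: "t > 0" for t
  proof -
    have "G t \<ge> G (c*t)"
    proof (rule DERIV_nonpos_imp_nonincreasing[where f=G])
      show "t \<le> c*t" using c t by simp
      fix x assume "t \<le> x" "x \<le> c*t"
      then have "x > 0" using t by linarith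
      then show "\<exists>y. (G has_real_derivative y) (at x) \<and> y \<le> 0"
        using der hpos by (intro exI[of _ "-h x"]) (auto simp: less_imp_le)
    qed
    then show ?thesis by simp
  qed
  have key: "eventually (\<lambda>t. G t - G(c*t) \<le> 2/N * G t) at_top" if N: "N > 0" for N :: nat
  proof -
    have ev: "\<forall>k\<in>{..<N}. eventually (\<lambda>v. c^k * h(c^k * v) \<ge> h v / 2) at_top"
    proof
      fix k assume "k \<in> {..<N}"
      define ck where "ck = c^k"
      have ck: "ck > 0" using c by (simp add: ck_def)
      have "((\<lambda>t. h(ck*t)/h t) \<longlongrightarrow> ck powr -1) at_top" using rv ck by auto
      moreover have "ck powr -1 > 1/(2*ck)" using ck by (simp add: powr_minus field_simps)
      ultimately have "eventually (\<lambda>t. h(ck*t)/h t > 1/(2*ck)) at_top"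
        by (rule order_tendstoD(1))
      moreover have "eventually (\<lambda>t::real. t > 0) at_top" by (rule eventually_gt_at_top)
      ultimately show "eventually (\<lambda>v. c^k * h(c^k * v) \<ge> h v / 2) at_top"
      proof eventually_elim
        case (elim t)
        have ht: "h t > 0" using hpos elim by auto
        from elim have "h(ck*t) > h t / (2*ck)" using ht ck by (simp add: field_simps)
        then have "ck * h(ck*t) > h t / 2" using ck by (simp add: field_simps)
        then show ?case by (simp add: ck_def)
      qed
    qed
    have "eventually (\<lambda>v. \<forall>k\<in>{..<N}. c^k * h(c^k * v) \<ge> h v / 2) at_top"
      by (rule eventually_ball_finite) (use ev in auto)
    then obtain T where T: "\<And>v k. v \<ge> T \<Longrightarrow> k < N \<Longrightarrow> c^k * h(c^k * v) \<ge> h v / 2"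
      by (auto simp: eventually_at_top_linorder)
    show ?thesis unfolding eventually_at_top_linorder
    proof (intro exI allI impI)
      fix t assume t: "t \<ge> max T 1"
      have tpos: "t > 0" using t by auto
      have step: "G (c^k*t) - G (c^Suc k*t) \<ge> (G t - G (c*t))/2" if k: "k < N" for k
      proof -
        have ckp: "c^k > 0" using c by simp
        define phi where "phi = (\<lambda>y. G (c ^ k * y) - G y / 2)"
        have "phi t \<ge> phi (c*t)"
        proof (rule DERIV_nonpos_imp_nonincreasing[where f=phi])
          show "t \<le> c*t" using c tpos by simp
          fix x assume x: "t \<le> x" "x \<le> c*t"
          have xpos: "x > 0" using x tpos by linarith
          have "c^k * x > 0" using ckp xpos by simp
          then have d1: "((\<lambda>y. G (c^k*y)) has_real_derivative (-h (c^k*x)) * (c^k * 1)) (at x)"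
            using der by (intro DERIV_chain2[where f=G] DERIV_cmult DERIV_ident) auto
          have d2: "((\<lambda>y. G y / 2) has_real_derivative (-h x)/2) (at x)"
            using der xpos by (intro DERIV_cdivide) auto
          have "(phi has_real_derivative (-h (c^k*x)) * (c^k * 1) - (-h x)/2) (at x)"
            unfolding phi_def by (rule DERIV_diff[OF d1 d2])
          moreover have "(-h (c^k*x)) * (c^k * 1) - (-h x)/2 \<le> 0"
            using T[of x k] x t k by (auto simp: mult.commute)
          ultimately show "\<exists>y. (phi has_real_derivative y) (at x) \<and> y \<le> 0" by blast
        qed
        then show ?thesis by (simp add: phi_def algebra_simps diff_divide_distrib)
      qed
      have "(\<Sum>k<N. G (c^k*t) - G (c^Suc k*t)) = G t - G (c^N*t)"
        using sum_lessThan_telescope'[where f="\<lambda>k. G (c^k*t)"] by simp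
      moreover have "(\<Sum>k<N. G (c^k*t) - G (c^Suc k*t)) \<ge> (\<Sum>k<N. (G t - G (c*t))/2)"
        by (rule sum_mono) (use step in auto)
      moreover have "G (c^N*t) > 0" using Gpos tpos c by simp
      ultimately have "N * ((G t - G (c*t))/2) < G t" by simp
      then show "G t - G(c*t) \<le> 2/N * G t" using N by (simp add: field_simps)
    qed
  qed
  show ?thesis
  proof (rule tendstoI)
    fix e :: real assume e: "e > 0"
    obtain N :: nat where N: "2/e < N" using reals_Archimedean2 by blast
    have Npos: "N > 0" using N e by (metis divide_pos_pos of_nat_0_less_iff order.strict_trans zero_less_numeral)
    have "2/N < e" using N e Npos by (simp add: field_simps)
    have "eventually (\<lambda>t::real. t > 0) at_top" by (rule eventually_gt_at_top)
    then show "eventually (\<lambda>t. dist (G(c*t)/G t) 1 < e) at_top"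
      using key[OF Npos]
    proof eventually_elim
      case (elim t)
      have Gt: "G t > 0" using Gpos elim by auto
      have "dist (G(c*t)/G t) 1 = (G t - G(c*t))/G t"
        using mono[of t] elim Gt by (simp add: dist_real_def field_simps abs_if)
      also have "\<dots> \<le> 2/N" using elim Gt by (simp add: field_simps)
      finally show ?case using \<open>2/N < e\<close> by linarith
    qed
  qed
qed

theorem mainTheorem8:
  fixes f :: "real \<Rightarrow> real"
  assumes cont: "continuous_on {0<..} f"
    and pos: "\<forall>x>0. f x > 0"
    and blowup: "filterlim (F_of f) at_top (at_right 0)"
    and rv: "(f \<circ> Finv f) \<in> RV_inf (-1)"
  shows "Finv f \<in> RV_inf 0"
proof -
  define F where "F = F_of f"
  define G where "G = Finv f"
  have GF: "G = inv_into {0<..} F" unfolding G_def F_def Finv_def by simp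
  have Fder: "\<And>x. x > 0 \<Longrightarrow> (F has_real_derivative -(1/f x)) (at x)"
    unfolding F_def using F_deriv[OF cont pos] by blast
  have Fcont: "\<And>x. x > 0 \<Longrightarrow> isCont F x"
    using Fder DERIV_isCont by blast
  have Fdec: "F y < F x" if "0 < x" "x < y" for x y
  proof -
    have "F x > F y"
    proof (rule DERIV_neg_imp_decreasing[where f=F])
      show "x < y" by fact
      fix z assume "x \<le> z" "z \<le> y"
      then have "z > 0" using that by linarith
      then show "\<exists>d. (F has_real_derivative d) (at z) \<and> d < 0"
        using Fder pos by (intro exI[of _ "-(1/f z)"]) auto
    qed
    then show ?thesis by simp
  qed
  have inj: "inj_on F {0<..}"
  proof (rule inj_onI)
    fix x y assume "x \<in> {0<..}" "y \<in> {0<..}" "F x = F y"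
    then show "x = y" using Fdec[of x y] Fdec[of y x] by (cases x y rule: linorder_cases) auto
  qed
  have GFz: "\<And>z. z > 0 \<Longrightarrow> G (F z) = z" unfolding GF using inj by (simp add: inv_into_f_f)
  have F1: "F 1 = 0" unfolding F_def F_of_def by (simp add: one_ereal_def)
  have surj: "t \<in> F ` {0<..}" if t: "t \<ge> 0" for t
  proof -
    have "eventually (\<lambda>x. F x > t) (at_right 0)"
      using blowup unfolding F_def filterlim_at_top_dense by blast
    then obtain b where b: "b > 0" "\<And>y. 0 < y \<Longrightarrow> y < b \<Longrightarrow> F y > t"
      unfolding eventually_at_right[OF zero_less_one] by (auto simp: eventually_at_right_field)
    define x0 where "x0 = min (b/2) (1/2)"
    have x0: "0 < x0" "x0 < b" "x0 \<le> 1" using b by (auto simp: x0_def)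
    have "F x0 > t" using b x0 by auto
    then have "\<exists>x. x0 \<le> x \<and> x \<le> 1 \<and> F x = t"
      using x0 t F1 Fcont by (intro IVT2) auto
    then show ?thesis using x0 by force
  qed
  have FG: "F (G t) = t" if "t \<ge> 0" for t
    unfolding GF by (rule f_inv_into_f[OF surj[OF that]])
  have Gpos: "G t > 0" if "t \<ge> 0" for t
    using inv_into_into[OF surj[OF that]] unfolding GF by simp
  have Gcont: "isCont G t" if t: "t > 0" for t
  proof -
    have g: "G t > 0" using Gpos t by simp
    have "isCont G (F (G t))"
    proof (rule isCont_inverse_function[where d="G t/2" and f=F and g=G and x="G t"])
      show "0 < G t/2" using g by simp
      fix z assume "\<bar>z - G t\<bar> \<le> G t / 2"
      then have "z > (0::real)" using g abs_ge_minus_self[of "z - G t"] by linarith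
      then show "G (F z) = z" "isCont F z" using GFz Fcont by auto
    qed
    then show ?thesis using FG t by simp
  qed
  have Gder: "(G has_real_derivative -(f (G t))) (at t)" if t: "t > 0" for t
  proof -
    have g: "G t > 0" using Gpos t by simp
    have "(G has_real_derivative inverse (-(1/f (G t)))) (at t)"
    proof (rule DERIV_inverse_function[where f=F and a=0 and b="t+1"])
      show "(F has_real_derivative -(1/f (G t))) (at (G t))" using Fder g by blast
      show "-(1/f (G t)) \<noteq> 0" using pos g by auto
      show "0 < t" "t < t+1" using t by auto
      show "\<And>y. 0 < y \<Longrightarrow> y < t + 1 \<Longrightarrow> F (G y) = y" using FG by auto
      show "isCont G t" using Gcont t by blast
    qed
    then show ?thesis by simp
  qed
  define h where "h = f \<circ> G"
  have hpos: "\<forall>t>0. h t > 0" using pos Gpos by (auto simp: h_def)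
  have rvh: "\<forall>c>0. ((\<lambda>t. h(c*t)/h t) \<longlongrightarrow> c powr -1) at_top"
    using rv unfolding RV_inf_def h_def G_def by auto
  have core: "((\<lambda>t. G(c*t)/G t) \<longlongrightarrow> 1) at_top" if c: "c > 1" for c
    by (rule rv0_core[OF _ hpos _ rvh c]) (use Gpos Gder in \<open>auto simp: h_def\<close>)
  have lim: "((\<lambda>t. G(c*t)/G t) \<longlongrightarrow> c powr 0) at_top" if c: "c > 0" for c
  proof -
    consider "c > 1" | "c = 1" | "c < 1" by linarith
    then have "((\<lambda>t. G(c*t)/G t) \<longlongrightarrow> 1) at_top"
    proof cases
      case 1 then show ?thesis by (rule core)
    next
      case 2
      have "eventually (\<lambda>t::real. t > 0) at_top" by (rule eventually_gt_at_top)
      then have "eventually (\<lambda>t. G(c*t)/G t = 1) at_top"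
      proof eventually_elim
        case (elim t)
        then have "G t > 0" using Gpos by simp
        then show ?case using 2 by simp
      qed
      then show ?thesis by (rule tendsto_eventually)
    next
      case 3
      have d: "1/c > 1" using 3 c by (simp add: field_simps)
      have fl: "filterlim (\<lambda>t. c*t) at_top at_top"
        using c by (intro filterlim_tendsto_pos_mult_at_top[OF tendsto_const] filterlim_ident) auto
      have "((\<lambda>t. G(1/c*(c*t))/G (c*t)) \<longlongrightarrow> 1) at_top"
        using filterlim_compose[OF core[OF d] fl] by (simp add: o_def)
      then have "((\<lambda>t. G t/G (c*t)) \<longlongrightarrow> 1) at_top" using c by simp
      then have "((\<lambda>t. inverse (G t/G (c*t))) \<longlongrightarrow> inverse 1) at_top"
        by (rule tendsto_inverse) simp
      then show ?thesis by simp
    qed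
    then show ?thesis using c by simp
  qed
  have meas: "set_borel_measurable borel {0<..} G"
    unfolding set_borel_measurable_def
    by (rule borel_measurable_continuous_on_indicator) (use Gcont in \<open>auto intro!: continuous_at_imp_continuous_on\<close>)
  have evp: "eventually (\<lambda>t. G t > 0) at_top"
    using eventually_gt_at_top[of 0] by eventually_elim (use Gpos in auto)
  show ?thesis unfolding RV_inf_def G_def[symmetric] using meas evp lim by auto
qed

end
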